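(* Let $\ell,t,s,d,m$ be positive integers with $m\ge d$, and $\mathbb{F}$ a finite field. Suppose $\pi=(\mathsf{Share},\mathsf{Eval},\mathsf{Rec})$ is a $t$-private $s$-server HSS scheme for a non-trivial class $\mathcal{F}\subseteq\mathrm{POLY}_{d,m}(\mathbb{F})^\ell$, which is linear over $\mathbb{F}$, whose $\mathsf{Share}$ is $t$-CNF sharing, and whose download rate equals $(s-dt)/s$. Let $n=\ell s/(s-dt)$. Then there exist a linear code $\mathcal{C}\subseteq\mathbb{F}^n$ of rate $(s-dt)/s$ and a labeling $\mathcal{L}:[n]\to[s]$ with $\Delta_{\mathcal{L}}(\mathcal{C})\ge dt+1$. (Specifically, $\mathcal{C}$ is the row span of the reconstruction matrix of $\pi$, and $\mathcal{L}(r)$ is the server sending the $r$-th downloaded symbol.)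
   Context: $\mathrm{POLY}_{d,m}(\mathbb{F})$: polynomials in $\mathbb{F}[X_1,\ldots,X_m]$ of total degree $\le d$. Amortized HSS for $\mathcal{F}\subseteq\mathrm{POLY}_{d,m}(\mathbb{F})^\ell$: $\ell m$ secrets $x^{(i)}_k\in\mathbb{F}$, $\mathbf{x}^{(i)}=(x^{(i)}_1,\dots,x^{(i)}_m)$, each shared independently by randomized $\mathsf{Share}$ into $s$ shares, server $j$ receiving the $j$-th share of each; given $\mathbf{f}=(f_1,\ldots,f_\ell)\in\mathcal{F}$, server $j$ computes output share $z_j=\mathsf{Eval}(\mathbf{f},j,\text{its shares})\in\mathbb{F}^{n_j}$ (arbitrary function); $\mathsf{Rec}(z_1\circ\cdots\circ z_s)$ must equal $(f_i(\mathbf{x}^{(i)}))_{i\in[\ell]}$ with probability 1 for all secrets and $\mathbf{f}$. $t$-private: any $\le t$ shares of a secret have distribution independent of the secret. Linear: $\mathsf{Share}$ and $\mathsf{Rec}:\mathbb{F}^{\sum n_j}\to\mathbb{F}^\ell$ are $\mathbb{F}$-linear ($\mathsf{Eval}$ arbitrary). Download rate: $\ell/\sum_j n_j$ (ratio of output bits to downloaded bits). $t$-CNF sharing of $x\in\mathbb{F}$ among $s$ servers: choose $y_T\in\mathbb{F}$ for all $T\subseteq[s]$, $|T|=t$, uniformly at random subject to $\sum_T y_T=x$; server $j$ receives $(y_T: j\notin T)$. $\mathcal{F}$ is non-trivial if some $(f_1,\ldots,f_\ell)\in\mathcal{F}$ has every $f_i$ containing (with nonzero coefficient) a monomial in at least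 $d$ distinct variables. A labeling is a surjection $\mathcal{L}:[n]\to[s]$. Labelweight: for $\mathbf{c}\in\mathbb{F}^n$, $\Delta_{\mathcal{L}}(\mathbf{c})=|\{\mathcal{L}(i): c_i\neq0\}|$; for a code $\mathcal{C}$, $\Delta_{\mathcal{L}}(\mathcal{C})=\min_{\mathbf{0}\ne\mathbf{c}\in\mathcal{C}}\Delta_{\mathcal{L}}(\mathbf{c})$. Rate of a linear code of dimension $k$ in $\mathbb{F}^n$ is $k/n$. *)

theory Defs
  imports "HOL-Analysis.Analysis" "HOL-Library.Poly_Mapping" "HOL-Library.Function_Algebras"
begin

text \<open>A monomial is a finitely supported exponent vector  finitely supported nat-to-nat map (variable k is X_(k+1));
  a polynomial over 'f is a finitely supported map from monomials to coefficients.\<close>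

type_synonym 'f mpoly = "(nat \<Rightarrow>\<^sub>0 nat) \<Rightarrow>\<^sub>0 'f"

definition total_deg :: "(nat \<Rightarrow>\<^sub>0 nat) \<Rightarrow> nat" where
  "total_deg a = (\<Sum>k\<in>Poly_Mapping.keys a. Poly_Mapping.lookup a k)"

definition mpoly_eval :: "'f::comm_ring_1 mpoly \<Rightarrow> (nat \<Rightarrow> 'f) \<Rightarrow> 'f" where
  "mpoly_eval p x = (\<Sum>a\<in>Poly_Mapping.keys p. Poly_Mapping.lookup p a * (\<Prod>k\<in>Poly_Mapping.keys a. x k ^ Poly_Mapping.lookup a k))"

definition POLY :: "nat \<Rightarrow> nat \<Rightarrow> ('f::zero) mpoly set" where
  "POLY d m = {p. \<forall>a\<in>Poly_Mapping.keys p. Poly_Mapping.keys a \<subseteq> {0..<m} \<and> total_deg a \<le> d}"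

text \<open>Tuples (f_1..f_l) are functions nat => mpoly with f i for i < l, and 0 beyond.\<close>
definition POLY_tuples :: "nat \<Rightarrow> nat \<Rightarrow> nat \<Rightarrow> (nat \<Rightarrow> ('f::zero) mpoly) set" where
  "POLY_tuples l d m = {fs. (\<forall>i<l. fs i \<in> POLY d m) \<and> (\<forall>i\<ge>l. fs i = 0)}"

definition nontrivial_class :: "nat \<Rightarrow> nat \<Rightarrow> (nat \<Rightarrow> ('f::zero) mpoly) set \<Rightarrow> bool" where
  "nontrivial_class l d Fc = (\<exists>fs\<in>Fc. \<forall>i<l. \<exists>a\<in>Poly_Mapping.keys (fs i). card (Poly_Mapping.keys a) \<ge> d)"

definition tsets :: "nat \<Rightarrow> nat \<Rightarrow> nat set set" where
  "tsets s t = {T. T \<subseteq> {0..<s} \<and> card T = t}"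

text \<open>Randomness of t-CNF sharing of x: (y_T)_T over t-subsets with sum x (zero elsewhere).
  Share is uniform over this set.\<close>
definition cnf_rand :: "nat \<Rightarrow> nat \<Rightarrow> 'f::comm_monoid_add \<Rightarrow> (nat set \<Rightarrow> 'f) set" where
  "cnf_rand s t x = {y. (\<forall>T. T \<notin> tsets s t \<longrightarrow> y T = 0) \<and> (\<Sum>T\<in>tsets s t. y T) = x}"

definition cnf_share :: "nat \<Rightarrow> nat \<Rightarrow> nat \<Rightarrow> (nat set \<Rightarrow> 'f::zero) \<Rightarrow> (nat set \<Rightarrow> 'f)" where
  "cnf_share s t j y = (\<lambda>T. if T \<in> tsets s t \<and> j \<notin> T then y T else 0)"

definition cnf_view :: "nat \<Rightarrow> nat \<Rightarrow> nat set \<Rightarrow> (nat set \<Rightarrow> 'f::zero) \<Rightarrow> (nat \<Rightarrow> nat set \<Rightarrow> 'f)" where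
  "cnf_view s t S y = (\<lambda>j. if j \<in> S then cnf_share s t j y else (\<lambda>_. 0))"

definition cnf_private :: "'f::{finite,comm_monoid_add} itself \<Rightarrow> nat \<Rightarrow> nat \<Rightarrow> bool" where
  "cnf_private _ s t = (\<forall>S. S \<subseteq> {0..<s} \<and> card S \<le> t \<longrightarrow>
     (\<forall>(x::'f) x' v.
        real (card {y\<in>cnf_rand s t x. cnf_view s t S y = v}) / real (card (cnf_rand s t x))
      = real (card {y\<in>cnf_rand s t x'. cnf_view s t S y = v}) / real (card (cnf_rand s t x'))))"

definition offset :: "(nat \<Rightarrow> nat) \<Rightarrow> nat \<Rightarrow> nat" where
  "offset nj j = (\<Sum>j'<j. nj j')"

definition server_of :: "nat \<Rightarrow> (nat \<Rightarrow> nat) \<Rightarrow> nat \<Rightarrow> nat" where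
  "server_of s nj r = (THE j. j < s \<and> offset nj j \<le> r \<and> r < offset nj j + nj j)"

definition concat_out :: "nat \<Rightarrow> (nat \<Rightarrow> nat) \<Rightarrow> (nat \<Rightarrow> nat \<Rightarrow> 'f) \<Rightarrow> nat \<Rightarrow> 'f" where
  "concat_out s nj z r = z (server_of s nj r) (r - offset nj (server_of s nj r))"

definition vscale :: "'f::times \<Rightarrow> (nat \<Rightarrow> 'f) \<Rightarrow> (nat \<Rightarrow> 'f)" where
  "vscale c v = (\<lambda>i. c * v i)"

definition Fvec :: "nat \<Rightarrow> (nat \<Rightarrow> 'f::zero) set" where
  "Fvec n = {v. \<forall>i\<ge>n. v i = 0}"

definition linear_code :: "nat \<Rightarrow> (nat \<Rightarrow> 'f::field) set \<Rightarrow> bool" where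
  "linear_code n C = (C \<subseteq> Fvec n \<and> (\<lambda>_. 0) \<in> C \<and> (\<forall>u\<in>C. \<forall>v\<in>C. (\<lambda>i. u i + v i) \<in> C)
                      \<and> (\<forall>c. \<forall>v\<in>C. vscale c v \<in> C))"

definition code_dim :: "(nat \<Rightarrow> 'f::field) set \<Rightarrow> nat" where
  "code_dim C = vector_space.dim vscale C"

definition code_rate :: "nat \<Rightarrow> (nat \<Rightarrow> 'f::field) set \<Rightarrow> real" where
  "code_rate n C = real (code_dim C) / real n"

definition is_labeling :: "nat \<Rightarrow> nat \<Rightarrow> (nat \<Rightarrow> nat) \<Rightarrow> bool" where
  "is_labeling n s L = (L ` {0..<n} = {0..<s})"

definition labelweight :: "nat \<Rightarrow> (nat \<Rightarrow> nat) \<Rightarrow> (nat \<Rightarrow> 'f::zero) \<Rightarrow> nat" where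
  "labelweight n L c = card {L i | i. i < n \<and> c i \<noteq> 0}"

definition code_labelweight :: "nat \<Rightarrow> (nat \<Rightarrow> nat) \<Rightarrow> (nat \<Rightarrow> 'f::zero) set \<Rightarrow> nat" where
  "code_labelweight n L C = Min {labelweight n L c | c. c \<in> C \<and> c \<noteq> 0}"

definition row_span :: "nat \<Rightarrow> nat \<Rightarrow> (nat \<Rightarrow> nat \<Rightarrow> 'f::field) \<Rightarrow> (nat \<Rightarrow> 'f) set" where
  "row_span l N R = module.span vscale ((\<lambda>i. (\<lambda>r. if r < N then R i r else 0)) ` {0..<l})"

end

theory Submission
  imports Defs
begin


lemma offset_Suc: "offset nj (Suc j) = offset nj j + nj j"
  by (simp add: offset_def)

lemma offset_mono: "j \<le> j' \<Longrightarrow> offset nj j \<le> offset nj j'"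
  unfolding offset_def by (rule sum_mono2) auto

lemma server_of_eq:
  assumes "j < s" "offset nj j \<le> r" "r < offset nj j + nj j"
  shows "server_of s nj r = j"
  unfolding server_of_def
proof (rule the_equality)
  show "j < s \<and> offset nj j \<le> r \<and> r < offset nj j + nj j" using assms by auto
next
  fix j' assume h: "j' < s \<and> offset nj j' \<le> r \<and> r < offset nj j' + nj j'"
  show "j' = j"
  proof (rule ccontr)
    assume "j' \<noteq> j"
    then consider "j < j'" | "j' < j" by linarith
    then show False
    proof cases
      case 1
      then have "offset nj (Suc j) \<le> offset nj j'" by (intro offset_mono) simp
      then show False using h assms by (simp add: offset_Suc)
    next
      case 2
      then have "offset nj (Suc j') \<le> offset nj j" by (intro offset_mono) simp
      then show False using h assms by (simp add: offset_Suc)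
    qed
  qed
qed

lemma server_of_ex:
  "r < offset nj s \<Longrightarrow> \<exists>j<s. offset nj j \<le> r \<and> r < offset nj j + nj j"
proof (induction s)
  case 0 then show ?case by (simp add: offset_def)
next
  case (Suc s)
  show ?case
  proof (cases "r < offset nj s")
    case True then show ?thesis using Suc.IH by (meson less_SucI)
  next
    case False then show ?thesis using Suc.prems by (auto simp: offset_Suc intro!: exI[of _ s])
  qed
qed

lemma server_of_props:
  assumes "r < (\<Sum>j<s. nj j)"
  shows "server_of s nj r < s \<and> offset nj (server_of s nj r) \<le> r
         \<and> r < offset nj (server_of s nj r) + nj (server_of s nj r)"
proof -
  from assms have "r < offset nj s" by (simp add: offset_def)
  then obtain j where j: "j<s" "offset nj j \<le> r" "r < offset nj j + nj j"
    using server_of_ex by blast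
  then have "server_of s nj r = j" by (rule server_of_eq)
  then show ?thesis using j by simp
qed

lemma offset_le_total: "j < s \<Longrightarrow> offset nj j + nj j \<le> (\<Sum>j<s. nj j)"
  using offset_mono[of "Suc j" s nj] by (simp add: offset_Suc offset_def)

lemma server_fiber:
  assumes "j < s"
  shows "{r. r < (\<Sum>j<s. nj j) \<and> server_of s nj r = j} = {offset nj j..<offset nj j + nj j}"
proof (intro set_eqI iffI)
  fix r assume "r \<in> {r. r < (\<Sum>j<s. nj j) \<and> server_of s nj r = j}"
  then show "r \<in> {offset nj j..<offset nj j + nj j}"
    using server_of_props[where s=s and nj=nj and r=r] by auto
next
  fix r assume r: "r \<in> {offset nj j..<offset nj j + nj j}"
  then have "server_of s nj r = j" using server_of_eq[OF assms] by auto
  moreover have "r < (\<Sum>j<s. nj j)" using r offset_le_total[OF assms, of nj] by auto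
  ultimately show "r \<in> {r. r < (\<Sum>j<s. nj j) \<and> server_of s nj r = j}" by auto
qed

lemma alt_cancel:
  fixes g :: "nat set \<Rightarrow> 'a::comm_ring_1"
  assumes "finite K" "k \<in> K" "\<And>E. E \<subseteq> K - {k} \<Longrightarrow> g (insert k E) = g E"
  shows "(\<Sum>E\<in>Pow K. (-1)^card E * g E) = 0"
proof -
  let ?K = "K - {k}"
  have K: "K = insert k ?K" using assms by auto
  have P: "Pow K = Pow ?K \<union> insert k ` Pow ?K" by (subst K, rule Pow_insert)
  have fin: "finite (Pow ?K)" using assms by simp
  have disj: "Pow ?K \<inter> insert k ` Pow ?K = {}" by auto
  have inj: "inj_on (insert k) (Pow ?K)" unfolding inj_on_def by blast
  have "(\<Sum>E\<in>insert k ` Pow ?K. (-1)^card E * g E) = (\<Sum>E\<in>Pow ?K. (-1)^card (insert k E) * g (insert k E))"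
    by (rule sum.reindex[OF inj, unfolded comp_def])
  also have "\<dots> = (\<Sum>E\<in>Pow ?K. - ((-1)^card E * g E))"
  proof (rule sum.cong)
    fix E assume E: "E \<in> Pow ?K"
    then have "finite E" "k \<notin> E" using assms(1) by (auto intro: finite_subset)
    then show "(-1)^card (insert k E) * g (insert k E) = - ((-1)^card E * g E)"
      using assms(3) E by simp
  qed simp
  finally show ?thesis
    by (subst P, subst sum.union_disjoint) (use fin disj in \<open>auto simp: sum_negf\<close>)
qed


lemma eval_indicator:
  fixes p :: "'f::comm_ring_1 mpoly"
  shows "mpoly_eval p (\<lambda>k. if k \<in> E then 1 else 0)
       = (\<Sum>a\<in>Poly_Mapping.keys p. Poly_Mapping.lookup p a * (if Poly_Mapping.keys a \<subseteq> E then 1 else 0))"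
  unfolding mpoly_eval_def
proof (rule sum.cong[OF refl])
  fix a
  show "Poly_Mapping.lookup p a * (\<Prod>k\<in>Poly_Mapping.keys a. (if k \<in> E then 1 else 0) ^ Poly_Mapping.lookup a k)
      = Poly_Mapping.lookup p a * (if Poly_Mapping.keys a \<subseteq> E then 1 else (0::'f))"
  proof (cases "Poly_Mapping.keys a \<subseteq> E")
    case True
    then have "(\<Prod>k\<in>Poly_Mapping.keys a. (if k \<in> E then 1 else 0) ^ Poly_Mapping.lookup a k) = (1::'f)"
      by (intro prod.neutral) auto
    then show ?thesis using True by simp
  next
    case False
    then obtain k where k: "k \<in> Poly_Mapping.keys a" "k \<notin> E" by auto
    then have "Poly_Mapping.lookup a k \<noteq> 0" by (simp add: in_keys_iff)
    then have "(\<Prod>k\<in>Poly_Mapping.keys a. (if k \<in> E then 1 else 0) ^ Poly_Mapping.lookup a k) = (0::'f)"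
      using k by (intro prod_zero) (auto intro!: bexI[of _ k] simp: power_0_left)
    then show ?thesis using False by simp
  qed
qed

lemma card_keys_le_deg: "card (Poly_Mapping.keys a) \<le> total_deg a"
proof -
  have "card (Poly_Mapping.keys a) = (\<Sum>k\<in>Poly_Mapping.keys a. 1)" by simp
  also have "\<dots> \<le> (\<Sum>k\<in>Poly_Mapping.keys a. Poly_Mapping.lookup a k)"
    by (rule sum_mono) (simp add: in_keys_iff Suc_leI)
  finally show ?thesis by (simp add: total_deg_def)
qed

lemma deg_tight:
  assumes "total_deg a \<le> card (Poly_Mapping.keys a)" "k \<in> Poly_Mapping.keys a"
  shows "Poly_Mapping.lookup a k = 1"
proof -
  have pos: "\<And>k. k \<in> Poly_Mapping.keys a \<Longrightarrow> Poly_Mapping.lookup a k \<ge> 1"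
    by (simp add: in_keys_iff Suc_leI)
  have "(\<Sum>k\<in>Poly_Mapping.keys a. Poly_Mapping.lookup a k - 1) + (\<Sum>k\<in>Poly_Mapping.keys a. 1)
       = (\<Sum>k\<in>Poly_Mapping.keys a. Poly_Mapping.lookup a k - 1 + 1)"
    by (simp only: sum.distrib)
  also have "\<dots> = (\<Sum>k\<in>Poly_Mapping.keys a. Poly_Mapping.lookup a k)"
    by (rule sum.cong) (auto dest: pos)
  finally have "(\<Sum>k\<in>Poly_Mapping.keys a. Poly_Mapping.lookup a k - 1)
       = (\<Sum>k\<in>Poly_Mapping.keys a. Poly_Mapping.lookup a k) - (\<Sum>k\<in>Poly_Mapping.keys a. 1)"
    by linarith
  also have "\<dots> = 0" using assms(1) by (simp add: total_deg_def)
  finally have "\<forall>k\<in>Poly_Mapping.keys a. Poly_Mapping.lookup a k - 1 = 0"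
    by (subst sum_eq_0_iff[symmetric]) auto
  then show ?thesis using assms(2) pos[OF assms(2)] by fastforce
qed

lemma monomial_unique:
  assumes "Poly_Mapping.keys a = Poly_Mapping.keys b"
    "total_deg a \<le> card (Poly_Mapping.keys a)" "total_deg b \<le> card (Poly_Mapping.keys b)"
  shows "a = b"
proof (rule poly_mapping_eqI)
  fix k
  show "Poly_Mapping.lookup a k = Poly_Mapping.lookup b k"
  proof (cases "k \<in> Poly_Mapping.keys a")
    case True
    then show ?thesis using deg_tight[OF assms(2) True] deg_tight[OF assms(3)] assms(1) by simp
  next
    case False
    then show ?thesis using assms(1) by (metis in_keys_iff)
  qed
qed

lemma alt_eval:
  fixes p :: "'f::comm_ring_1 mpoly"
  assumes pP: "p \<in> POLY d m" and a0: "a0 \<in> Poly_Mapping.keys p" "card (Poly_Mapping.keys a0) \<ge> d"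
  shows "(\<Sum>E\<in>Pow (Poly_Mapping.keys a0). (-1)^card E * mpoly_eval p (\<lambda>k. if k \<in> E then 1 else 0))
       = (-1)^card (Poly_Mapping.keys a0) * Poly_Mapping.lookup p a0"
proof -
  let ?K = "Poly_Mapping.keys a0"
  have fK: "finite ?K" by simp
  have degs: "\<And>a. a \<in> Poly_Mapping.keys p \<Longrightarrow> total_deg a \<le> d" using pP by (auto simp: POLY_def)
  have a0t: "total_deg a0 \<le> card ?K" using degs[OF a0(1)] a0(2) by simp
  have "(\<Sum>E\<in>Pow ?K. (-1)^card E * mpoly_eval p (\<lambda>k. if k \<in> E then 1 else 0))
      = (\<Sum>E\<in>Pow ?K. \<Sum>a\<in>Poly_Mapping.keys p. (-1)^card E * (Poly_Mapping.lookup p a * (if Poly_Mapping.keys a \<subseteq> E then 1 else 0)))"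
    by (simp add: eval_indicator sum_distrib_left)
  also have "\<dots> = (\<Sum>a\<in>Poly_Mapping.keys p. \<Sum>E\<in>Pow ?K. (-1)^card E * (Poly_Mapping.lookup p a * (if Poly_Mapping.keys a \<subseteq> E then 1 else 0)))"
    by (rule sum.swap)
  also have "\<dots> = (\<Sum>a\<in>Poly_Mapping.keys p. if a = a0 then (-1)^card ?K * Poly_Mapping.lookup p a0 else 0)"
  proof (rule sum.cong[OF refl])
    fix a assume a: "a \<in> Poly_Mapping.keys p"
    show "(\<Sum>E\<in>Pow ?K. (-1)^card E * (Poly_Mapping.lookup p a * (if Poly_Mapping.keys a \<subseteq> E then 1 else 0)))
        = (if a = a0 then (-1)^card ?K * Poly_Mapping.lookup p a0 else 0)"
    proof (cases "a = a0")
      case True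
      have "(\<Sum>E\<in>Pow ?K. (-1)^card E * (Poly_Mapping.lookup p a0 * (if ?K \<subseteq> E then 1 else 0)))
          = (\<Sum>E\<in>Pow ?K. if E = ?K then (-1)^card ?K * Poly_Mapping.lookup p a0 else 0)"
        by (rule sum.cong[OF refl]) auto
      also have "\<dots> = (-1)^card ?K * Poly_Mapping.lookup p a0" by (simp add: sum.delta')
      finally show ?thesis using True by simp
    next
      case False
      have "\<exists>k\<in>?K. k \<notin> Poly_Mapping.keys a"
      proof (rule ccontr)
        assume "\<not> ?thesis"
        then have sub: "?K \<subseteq> Poly_Mapping.keys a" by auto
        have "card ?K \<le> card (Poly_Mapping.keys a)" by (rule card_mono[OF _ sub]) simp
        moreover have "card (Poly_Mapping.keys a) \<le> d" using card_keys_le_deg[of a] degs[OF a] by simp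
        ultimately have eq: "?K = Poly_Mapping.keys a" using sub a0(2)
          by (intro card_subset_eq) auto
        have "total_deg a \<le> card (Poly_Mapping.keys a)" using degs[OF a] a0(2) eq by simp
        then have "a0 = a" using monomial_unique[OF eq a0t] by simp
        then show False using False by simp
      qed
      then obtain k where k: "k \<in> ?K" "k \<notin> Poly_Mapping.keys a" by blast
      have "(\<Sum>E\<in>Pow ?K. (-1)^card E * (Poly_Mapping.lookup p a * (if Poly_Mapping.keys a \<subseteq> E then 1 else 0))) = 0"
        by (rule alt_cancel[OF fK k(1)]) (use k in auto)
      then show ?thesis using False by simp
    qed
  qed
  also have "\<dots> = (-1)^card ?K * Poly_Mapping.lookup p a0" using a0(1) by (simp add: sum.delta')
  finally show ?thesis .
qed


lemma covering:
  assumes "S \<subseteq> {0..<s}" "card S \<le> d*t" "d*t \<le> s" "finite K" "card K = d"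
  shows "\<exists>T. (\<forall>k\<in>K. T k \<in> tsets s t) \<and> S \<subseteq> (\<Union>k\<in>K. T k)"
proof -
  have fS: "finite S" using assms(1) finite_subset by blast
  obtain S' where S': "S \<subseteq> S'" "S' \<subseteq> {0..<s}" "card S' = d*t"
    using exists_subset_between[of S "d*t" "{0..<s}"] assms by auto
  have fS': "finite S'" using S'(2) finite_subset by blast
  have "card (K \<times> {0..<t}) = card S'" using S' assms by (simp add: card_cartesian_product)
  then obtain h where h: "bij_betw h (K \<times> {0..<t}) S'"
    using finite_same_card_bij[of "K \<times> {0..<t}" S'] assms(4) fS' by auto
  define T where "T k = h ` ({k} \<times> {0..<t})" for k
  have "\<forall>k\<in>K. T k \<in> tsets s t"
  proof
    fix k assume k: "k \<in> K"
    have sub: "{k} \<times> {0..<t} \<subseteq> K \<times> {0..<t}" using k by auto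
    have inj: "inj_on h ({k} \<times> {0..<t})" using bij_betw_imp_inj_on[OF h] inj_on_subset[OF _ sub] by blast
    have "card (T k) = t" unfolding T_def using card_image[OF inj] by (simp add: card_cartesian_product)
    moreover have "T k \<subseteq> {0..<s}" unfolding T_def using bij_betw_imp_surj_on[OF h] sub S'(2) by blast
    ultimately show "T k \<in> tsets s t" by (simp add: tsets_def)
  qed
  moreover have "S \<subseteq> (\<Union>k\<in>K. T k)"
  proof
    fix x assume "x \<in> S"
    then have "x \<in> h ` (K \<times> {0..<t})" using S'(1) bij_betw_imp_surj_on[OF h] by auto
    then show "x \<in> (\<Union>k\<in>K. T k)" unfolding T_def by auto
  qed
  ultimately show ?thesis by blast
qed

lemma key:
  fixes fs :: "nat \<Rightarrow> ('f::{finite,field}) mpoly"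
    and Eval :: "(nat \<Rightarrow> 'f mpoly) \<Rightarrow> nat \<Rightarrow> (nat \<Rightarrow> nat \<Rightarrow> nat set \<Rightarrow> 'f) \<Rightarrow> nat \<Rightarrow> 'f"
    and R :: "nat \<Rightarrow> nat \<Rightarrow> 'f" and lam :: "nat \<Rightarrow> 'f"
  assumes dts: "d*t \<le> s" and dpos: "d > 0"
    and i0: "i0 < l" "lam i0 \<noteq> 0"
    and fsP: "fs i0 \<in> POLY d m"
    and a0: "a0 \<in> Poly_Mapping.keys (fs i0)" "card (Poly_Mapping.keys a0) \<ge> d"
    and correct: "\<And>x Y. (\<forall>i<l. \<forall>k<m. Y i k \<in> cnf_rand s t (x i k)) \<Longrightarrow>
        \<forall>i<l. (\<Sum>r<N. R i r *
                 concat_out s nj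
                   (\<lambda>j. Eval fs j (\<lambda>i' k. if i' < l \<and> k < m then cnf_share s t j (Y i' k) else (\<lambda>_. 0)))
                   r)
              = mpoly_eval (fs i) (x i)"
    and N: "N = (\<Sum>j<s. nj j)"
  shows "d*t + 1 \<le> card {server_of s nj r | r. r < N \<and> (\<Sum>i<l. lam i * R i r) \<noteq> 0}"
proof (rule ccontr)
  define S where "S = {server_of s nj r | r. r < N \<and> (\<Sum>i<l. lam i * R i r) \<noteq> 0}"
  define c where "c r = (\<Sum>i<l. lam i * R i r)" for r
  assume "\<not> d*t + 1 \<le> card {server_of s nj r | r. r < N \<and> (\<Sum>i<l. lam i * R i r) \<noteq> 0}"
  then have cS: "card S \<le> d*t" unfolding S_def by simp
  define K where "K = Poly_Mapping.keys a0"
  have fK: "finite K" unfolding K_def by simp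
  have "total_deg a0 \<le> d" using fsP a0(1) by (auto simp: POLY_def)
  then have cK: "card K = d" using card_keys_le_deg[of a0] a0(2) unfolding K_def by simp
  then obtain k0 where k0: "k0 \<in> K" using dpos by (metis card.empty ex_in_conv less_irrefl)
  have Ssub: "S \<subseteq> {0..<s}" unfolding S_def using server_of_props[where s=s and nj=nj] N by auto
  obtain T where T: "\<forall>k\<in>K. T k \<in> tsets s t" "S \<subseteq> (\<Union>k\<in>K. T k)"
    using covering[OF Ssub cS dts fK cK] by blast
  define Y :: "nat set \<Rightarrow> nat \<Rightarrow> nat \<Rightarrow> nat set \<Rightarrow> 'f"
    where "Y E i k T' = (if i = i0 \<and> k \<in> E \<and> T' = T k then 1 else 0)" for E i k T'
  define X :: "nat set \<Rightarrow> nat \<Rightarrow> nat \<Rightarrow> 'f"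
    where "X E i k = (if i = i0 \<and> k \<in> E then 1 else 0)" for E i k
  define out where "out E r = concat_out s nj
                   (\<lambda>j. Eval fs j (\<lambda>i' k. if i' < l \<and> k < m then cnf_share s t j (Y E i' k) else (\<lambda>_. 0))) r" for E r
  have fts: "finite (tsets s t)" unfolding tsets_def
    by (rule finite_subset[of _ "Pow {0..<s}"]) auto
  have cr: "\<forall>i<l. \<forall>k<m. Y E i k \<in> cnf_rand s t (X E i k)" if E: "E \<subseteq> K" for E
  proof (intro allI impI)
    fix i k assume "i < l" "k < m"
    show "Y E i k \<in> cnf_rand s t (X E i k)"
    proof (cases "i = i0 \<and> k \<in> E")
      case True
      then have Tk: "T k \<in> tsets s t" using T(1) E by auto
      have "(\<Sum>T'\<in>tsets s t. Y E i k T') = (\<Sum>T'\<in>tsets s t. if T' = T k then 1 else 0)"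
        using True by (simp add: Y_def)
      also have "\<dots> = 1" using Tk fts by (simp add: sum.delta')
      finally show ?thesis using True Tk unfolding cnf_rand_def by (auto simp: Y_def X_def)
    next
      case False
      then show ?thesis unfolding cnf_rand_def by (auto simp: Y_def X_def)
    qed
  qed
  have eq: "(\<Sum>i<l. lam i * mpoly_eval (fs i) (X E i)) = (\<Sum>r<N. c r * out E r)" if E: "E \<subseteq> K" for E
  proof -
    have C: "\<forall>i<l. (\<Sum>r<N. R i r * out E r) = mpoly_eval (fs i) (X E i)"
      using correct[OF cr[OF E]] unfolding out_def by blast
    have "(\<Sum>i<l. lam i * mpoly_eval (fs i) (X E i)) = (\<Sum>i<l. lam i * (\<Sum>r<N. R i r * out E r))"
      using C by simp
    also have "\<dots> = (\<Sum>i<l. \<Sum>r<N. lam i * R i r * out E r)"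
      by (simp add: sum_distrib_left mult.assoc)
    also have "\<dots> = (\<Sum>r<N. \<Sum>i<l. lam i * R i r * out E r)" by (rule sum.swap)
    also have "\<dots> = (\<Sum>r<N. c r * out E r)" by (simp add: c_def sum_distrib_right)
    finally show ?thesis .
  qed
  have lhs: "(\<Sum>E\<in>Pow K. (-1)^card E * (\<Sum>i<l. lam i * mpoly_eval (fs i) (X E i)))
        = lam i0 * ((-1)^card K * Poly_Mapping.lookup (fs i0) a0)"
  proof -
    have "(\<Sum>E\<in>Pow K. (-1)^card E * (\<Sum>i<l. lam i * mpoly_eval (fs i) (X E i)))
        = (\<Sum>i<l. lam i * (\<Sum>E\<in>Pow K. (-1)^card E * mpoly_eval (fs i) (X E i)))"
      by (simp add: sum_distrib_left sum.swap[of _ "Pow K"] mult.left_commute)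
    also have "\<dots> = (\<Sum>i<l. if i = i0 then lam i0 * ((-1)^card K * Poly_Mapping.lookup (fs i0) a0) else 0)"
    proof (rule sum.cong[OF refl])
      fix i assume "i \<in> {..<l}"
      show "lam i * (\<Sum>E\<in>Pow K. (-1)^card E * mpoly_eval (fs i) (X E i))
          = (if i = i0 then lam i0 * ((-1)^card K * Poly_Mapping.lookup (fs i0) a0) else 0)"
      proof (cases "i = i0")
        case True
        have "X E i0 = (\<lambda>k. if k \<in> E then 1 else 0)" for E by (simp add: X_def fun_eq_iff)
        then show ?thesis using True alt_eval[OF fsP a0] unfolding K_def by simp
      next
        case False
        have "(\<Sum>E\<in>Pow K. (-1)^card E * mpoly_eval (fs i) (X E i)) = 0"
        proof (rule alt_cancel[OF fK k0])
          have "X E' i = (\<lambda>k. 0)" for E' by (simp add: fun_eq_iff X_def False)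
          then show "mpoly_eval (fs i) (X (insert k0 E) i) = mpoly_eval (fs i) (X E i)" for E by simp
        qed
        then show ?thesis using False by simp
      qed
    qed
    also have "\<dots> = lam i0 * ((-1)^card K * Poly_Mapping.lookup (fs i0) a0)"
      using i0(1) by (simp add: sum.delta)
    finally show ?thesis .
  qed
  have rhs: "(\<Sum>E\<in>Pow K. (-1)^card E * (\<Sum>r<N. c r * out E r)) = 0"
  proof -
    have "(\<Sum>E\<in>Pow K. (-1)^card E * (\<Sum>r<N. c r * out E r))
        = (\<Sum>r<N. c r * (\<Sum>E\<in>Pow K. (-1)^card E * out E r))"
      by (simp add: sum_distrib_left sum.swap[of _ "Pow K"] mult.left_commute)
    also have "\<dots> = 0"
    proof (rule sum.neutral, intro ballI)
      fix r assume r: "r \<in> {..<N}"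
      show "c r * (\<Sum>E\<in>Pow K. (-1)^card E * out E r) = 0"
      proof (cases "c r = 0")
        case False
        then have "server_of s nj r \<in> S" unfolding S_def c_def using r by auto
        then obtain k where k: "k \<in> K" "server_of s nj r \<in> T k" using T(2) by blast
        have "(\<Sum>E\<in>Pow K. (-1)^card E * out E r) = 0"
        proof (rule alt_cancel[OF fK k(1)])
          fix E assume E: "E \<subseteq> K - {k}"
          have "(\<lambda>i' k'. if i' < l \<and> k' < m then cnf_share s t (server_of s nj r) (Y (insert k E) i' k') else (\<lambda>_. 0))
              = (\<lambda>i' k'. if i' < l \<and> k' < m then cnf_share s t (server_of s nj r) (Y E i' k') else (\<lambda>_. 0))"
            using k(2) by (auto simp: fun_eq_iff cnf_share_def Y_def)
          then show "out (insert k E) r = out E r" unfolding out_def concat_out_def by simp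
        qed
        then show ?thesis by simp
      qed simp
    qed
    finally show ?thesis .
  qed
  have "lam i0 * ((-1)^card K * Poly_Mapping.lookup (fs i0) a0) = 0"
    using lhs rhs eq by (simp add: Pow_def)
  moreover have "Poly_Mapping.lookup (fs i0) a0 \<noteq> 0" using a0(1) by (simp add: in_keys_iff)
  ultimately show False using i0(2) by simp
qed


lemma fun_sum_apply: "(\<Sum>v\<in>A. f v) r = (\<Sum>v\<in>A. f v r)"
  for f :: "'b \<Rightarrow> 'a \<Rightarrow> 'c::comm_monoid_add"
  by (induction A rule: infinite_finite_induct) auto

lemma vs_vscale: "vector_space (vscale :: 'f::field \<Rightarrow> (nat \<Rightarrow> 'f) \<Rightarrow> nat \<Rightarrow> 'f)"
  by unfold_locales (auto simp: vscale_def fun_eq_iff algebra_simps)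

lemma card_P:
  assumes "D \<subseteq> {0..<s}" "N = (\<Sum>j<s. nj j)"
  shows "card {r. r < N \<and> server_of s nj r \<notin> D} = N - (\<Sum>j\<in>D. nj j)"
proof -
  have fD: "finite D" using assms(1) finite_subset by blast
  let ?P = "{r. r < N \<and> server_of s nj r \<notin> D}"
  let ?Q = "{r. r < N \<and> server_of s nj r \<in> D}"
  have Q: "?Q = (\<Union>j\<in>D. {r. r < N \<and> server_of s nj r = j})" by auto
  have "card ?Q = (\<Sum>j\<in>D. card {r. r < N \<and> server_of s nj r = j})"
    unfolding Q by (rule card_UN_disjoint) (use fD in auto)
  also have "\<dots> = (\<Sum>j\<in>D. nj j)"
  proof (rule sum.cong[OF refl])
    fix j assume "j \<in> D"
    then have "j < s" using assms(1) by auto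
    then show "card {r. r < N \<and> server_of s nj r = j} = nj j"
      using server_fiber[of j s nj] assms(2) by simp
  qed
  finally have cQ: "card ?Q = (\<Sum>j\<in>D. nj j)" .
  have U: "?P \<union> ?Q = {..<N}" by auto
  have "card (?P \<union> ?Q) = card ?P + card ?Q" by (rule card_Un_disjoint) auto
  then have "card ?P + card ?Q = N" using U by simp
  then show ?thesis using cQ by simp
qed

lemma singleton_count:
  fixes R :: "nat \<Rightarrow> nat \<Rightarrow> 'f::{finite,field}"
  assumes keyL: "\<And>lam i0. i0 < l \<Longrightarrow> lam i0 \<noteq> 0 \<Longrightarrow>
        k + 1 \<le> card {server_of s nj r |r. r < N \<and> (\<Sum>i<l. lam i * R i r) \<noteq> 0}"
    and D: "card D = k" "finite D"
    and P: "P = {r. r < N \<and> server_of s nj r \<notin> D}"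
  shows "l \<le> card P"
proof -
  define phi where "phi xs = (\<lambda>r\<in>P. \<Sum>i<l. xs ! i * R i r)" for xs :: "'f list"
  let ?A = "{xs. set xs \<subseteq> (UNIV::'f set) \<and> length xs = l}"
  have fP: "finite P" unfolding P by simp
  have inj: "inj_on phi ?A"
  proof (rule inj_onI)
    fix xs ys assume xs: "xs \<in> ?A" and ys: "ys \<in> ?A" and e: "phi xs = phi ys"
    show "xs = ys"
    proof (rule ccontr)
      assume "xs \<noteq> ys"
      moreover have lx: "length xs = l" "length ys = l" using xs ys by auto
      ultimately obtain i0 where i0: "i0 < l" "xs ! i0 \<noteq> ys ! i0"
        using nth_equalityI[of xs ys] by auto
      define lam where "lam i = xs ! i - ys ! i" for i
      have "lam i0 \<noteq> 0" using i0 by (simp add: lam_def)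
      then have big: "k + 1 \<le> card {server_of s nj r |r. r < N \<and> (\<Sum>i<l. lam i * R i r) \<noteq> 0}"
        using keyL i0(1) by blast
      have "{server_of s nj r |r. r < N \<and> (\<Sum>i<l. lam i * R i r) \<noteq> 0} \<subseteq> D"
      proof
        fix j assume "j \<in> {server_of s nj r |r. r < N \<and> (\<Sum>i<l. lam i * R i r) \<noteq> 0}"
        then obtain r where r: "j = server_of s nj r" "r < N" "(\<Sum>i<l. lam i * R i r) \<noteq> 0" by blast
        show "j \<in> D"
        proof (rule ccontr)
          assume "j \<notin> D"
          then have "r \<in> P" using r P by simp
          then have "(\<Sum>i<l. xs ! i * R i r) = (\<Sum>i<l. ys ! i * R i r)"
            using fun_cong[OF e, of r] by (simp add: phi_def)
          then have "(\<Sum>i<l. lam i * R i r) = 0"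
            by (simp add: lam_def left_diff_distrib sum_subtractf)
          then show False using r by simp
        qed
      qed
      then have "card {server_of s nj r |r. r < N \<and> (\<Sum>i<l. lam i * R i r) \<noteq> 0} \<le> k"
        using card_mono[OF D(2)] D(1) by simp
      then show False using big by simp
    qed
  qed
  have sub: "phi ` ?A \<subseteq> (\<Pi>\<^sub>E r\<in>P. (UNIV::'f set))" by (auto simp: phi_def)
  have "card ?A \<le> card (\<Pi>\<^sub>E r\<in>P. (UNIV::'f set))"
    by (rule card_inj_on_le[OF inj sub]) (simp add: fP finite_PiE)
  moreover have "card {xs::'f list. length xs = l} = CARD('f) ^ l"
    using card_lists_length_eq[of "UNIV::'f set" l] by simp
  ultimately have le: "CARD('f) ^ l \<le> CARD('f) ^ card P"
    by (simp add: card_PiE fP)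
  have "card {0::'f, 1} \<le> CARD('f)" by (rule card_mono) auto
  then have "1 < CARD('f)" by simp
  then show ?thesis using power_le_imp_le_exp le by blast
qed

lemma avg_contra:
  assumes j0: "j0 < s" "nj j0 = 0" and ks: "k < s" "0 < k"
    and sing: "\<And>D. D \<subseteq> {0..<s} \<Longrightarrow> card D = k \<Longrightarrow> l \<le> N - (\<Sum>j\<in>D. nj j)"
    and ls: "l * s = N * (s - k)" and N: "N = (\<Sum>j<s. nj j)"
  shows "N = 0"
proof -
  define DD where "DD = {D. D \<subseteq> {0..<s} - {j0} \<and> card D = k}"
  have fDD: "finite DD" unfolding DD_def by (rule finite_subset[of _ "Pow {0..<s}"]) auto
  have "card ({0..<s} - {j0}) = s - 1" using j0 by simp
  then have "k \<le> card ({0..<s} - {j0})" using ks by simp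
  then obtain D0 where "D0 \<subseteq> {0..<s} - {j0}" "card D0 = k"
    using obtain_subset_with_card_n[of k "{0..<s} - {j0}"] by blast
  then have neDD: "DD \<noteq> {}" unfolding DD_def by blast
  define M where "M = Max ((\<lambda>D. sum nj D) ` DD)"
  have "M \<in> (\<lambda>D. sum nj D) ` DD" unfolding M_def using fDD neDD by (intro Max_in) auto
  then obtain D where D: "D \<in> DD" "sum nj D = M" by blast
  have maxD: "\<And>D'. D' \<in> DD \<Longrightarrow> sum nj D' \<le> sum nj D"
    using D fDD unfolding M_def by (auto intro: Max_ge)
  have Dsub: "D \<subseteq> {0..<s}" "j0 \<notin> D" "card D = k" using D(1) unfolding DD_def by auto
  have fD: "finite D" using Dsub(1) finite_subset by blast
  define Rest where "Rest = {0..<s} - D"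
  have fR: "finite Rest" unfolding Rest_def by simp
  have j0R: "j0 \<in> Rest" unfolding Rest_def using j0 Dsub by simp
  have cR: "card Rest = s - k" unfolding Rest_def using Dsub by (simp add: card_Diff_subset fD)
  have swap: "nj j' \<le> nj j" if j: "j \<in> D" and j': "j' \<in> Rest" for j j'
  proof (cases "j' = j0")
    case True then show ?thesis using j0 by simp
  next
    case False
    let ?D' = "insert j' (D - {j})"
    have "j' \<notin> D" using j' unfolding Rest_def by simp
    have kpos: "0 < k" using Dsub(3) j fD card_gt_0_iff by blast
    have c1: "card (D - {j}) = k - 1" using fD j Dsub(3) by simp
    have "card ?D' = Suc (card (D - {j}))" using fD \<open>j' \<notin> D\<close> by (intro card_insert_disjoint) auto
    then have "card ?D' = k" using c1 kpos by simp
    moreover have "?D' \<subseteq> {0..<s} - {j0}" using Dsub j j' False unfolding Rest_def by auto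
    ultimately have "?D' \<in> DD" unfolding DD_def by simp
    then have "sum nj ?D' \<le> sum nj D" by (rule maxD)
    moreover have "sum nj ?D' = nj j' + sum nj (D - {j})" using fD \<open>j' \<notin> D\<close> by simp
    moreover have "sum nj D = nj j + sum nj (D - {j})" using fD j by (simp add: sum.remove)
    ultimately show ?thesis by simp
  qed
  define SD where "SD = sum nj D"
  define SR where "SR = sum nj Rest"
  have NS: "N = SD + SR"
  proof -
    have "{..<s} = D \<union> Rest" using Dsub unfolding Rest_def by auto
    then have "N = sum nj (D \<union> Rest)" using N by simp
    also have "\<dots> = SD + SR" unfolding SD_def SR_def
      by (rule sum.union_disjoint) (use fD fR in \<open>auto simp: Rest_def\<close>)
    finally show ?thesis .
  qed
  have F1: "(\<Sum>p\<in>D \<times> Rest. nj (snd p)) = k * SR"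
    using sum.cartesian_product[of "\<lambda>j j'. nj j'" Rest D] Dsub(3) by (simp add: SR_def split_def)
  have F2: "(\<Sum>p\<in>D \<times> Rest. nj (fst p)) = (s - k) * SD"
    using sum.cartesian_product[of "\<lambda>j j'. nj j" Rest D] cR by (simp add: SD_def sum_distrib_left split_def)
  have "(\<Sum>p\<in>D \<times> Rest. nj (snd p)) \<le> (\<Sum>p\<in>D \<times> Rest. nj (fst p))"
    by (rule sum_mono) (auto intro: swap)
  have l1: "l \<le> SR" using sing[OF Dsub(1) Dsub(3)] NS by (simp add: SD_def)
  define s' where "s' = s - k"
  have s': "s = s' + k" using ks unfolding s'_def by simp
  have "(SD + SR) * s' \<le> SR * (s' + k)"
  proof -
    have "N * s' = l * s" using ls unfolding s'_def by simp
    also have "\<dots> \<le> SR * s" using l1 by simp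
    finally show ?thesis using NS s' by simp
  qed
  then have A: "SD * s' \<le> SR * k" by (simp add: algebra_simps)
  have eqF: "(\<Sum>p\<in>D \<times> Rest. nj (snd p)) \<ge> (\<Sum>p\<in>D \<times> Rest. nj (fst p))"
    using F1 F2 A s' by (simp add: mult.commute)
  have alleq: "nj j = nj j'" if "j \<in> D" "j' \<in> Rest" for j j'
  proof (rule ccontr)
    assume "nj j \<noteq> nj j'"
    then have lt: "nj j' < nj j" using swap[OF that] by simp
    have "(\<Sum>p\<in>D \<times> Rest. nj (snd p)) < (\<Sum>p\<in>D \<times> Rest. nj (fst p))"
    proof (rule sum_strict_mono_ex1)
      show "finite (D \<times> Rest)" using fD fR by simp
      show "\<forall>p\<in>D \<times> Rest. nj (snd p) \<le> nj (fst p)" using swap by auto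
      show "\<exists>p\<in>D \<times> Rest. nj (snd p) < nj (fst p)" using that lt by force
    qed
    then show False using eqF by simp
  qed
  obtain j1 where j1: "j1 \<in> D" using Dsub(3) ks by (metis card.empty ex_in_conv less_irrefl)
  have "nj j = 0" if "j < s" for j
  proof (cases "j \<in> D")
    case True then show ?thesis using alleq[OF True j0R] j0 by simp
  next
    case False
    then have jR: "j \<in> Rest" using that unfolding Rest_def by simp
    show ?thesis using alleq[OF j1 jR] alleq[OF j1 j0R] j0 by simp
  qed
  then show ?thesis using N by simp
qed

theorem mainTheorem2:
  fixes l t s d m :: nat
    and Fc :: "(nat \<Rightarrow> ('f::{finite,field}) mpoly) set"
    and nj :: "nat \<Rightarrow> nat"
    and Eval :: "(nat \<Rightarrow> 'f mpoly) \<Rightarrow> nat \<Rightarrow> (nat \<Rightarrow> nat \<Rightarrow> nat set \<Rightarrow> 'f) \<Rightarrow> nat \<Rightarrow> 'f"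
    and R :: "nat \<Rightarrow> nat \<Rightarrow> 'f"
  assumes pos: "l > 0" "t > 0" "s > 0" "d > 0" "m > 0"
    and md: "m \<ge> d"
    and Fc_sub: "Fc \<subseteq> POLY_tuples l d m"
    and nontriv: "nontrivial_class l d Fc"
    and priv: "cnf_private TYPE('f) s t"
    and correct: "\<And>fs x Y. fs \<in> Fc \<Longrightarrow>
        (\<forall>i<l. \<forall>k<m. Y i k \<in> cnf_rand s t (x i k)) \<Longrightarrow>
        \<forall>i<l. (\<Sum>r<(\<Sum>j<s. nj j). R i r *
                 concat_out s nj
                   (\<lambda>j. Eval fs j (\<lambda>i' k. if i' < l \<and> k < m then cnf_share s t j (Y i' k) else (\<lambda>_. 0)))
                   r)
              = mpoly_eval (fs i) (x i)"
    and rate: "real l / real (\<Sum>j<s. nj j) = (real s - real d * real t) / real s"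
  shows "\<exists>n C L. real n = real l * real s / (real s - real d * real t)
           \<and> C = row_span l n R \<and> L = server_of s nj
           \<and> linear_code n C \<and> code_rate n C = (real s - real d * real t) / real s
           \<and> is_labeling n s L
           \<and> code_labelweight n L C \<ge> d * t + 1"
proof -
  define N where "N = (\<Sum>j<s. nj j)"
  obtain fs where fs: "fs \<in> Fc" "\<forall>i<l. \<exists>a\<in>Poly_Mapping.keys (fs i). d \<le> card (Poly_Mapping.keys a)"
    using nontriv unfolding nontrivial_class_def by blast
  have fsP: "fs i \<in> POLY d m" if "i < l" for i
    using Fc_sub fs(1) that unfolding POLY_tuples_def by blast
  have corrN: "\<And>x Y. (\<forall>i<l. \<forall>k<m. Y i k \<in> cnf_rand s t (x i k)) \<Longrightarrow>
        \<forall>i<l. (\<Sum>r<N. R i r *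
                 concat_out s nj
                   (\<lambda>j. Eval fs j (\<lambda>i' k. if i' < l \<and> k < m then cnf_share s t j (Y i' k) else (\<lambda>_. 0)))
                   r)
              = mpoly_eval (fs i) (x i)"
    using correct[OF fs(1)] unfolding N_def by blast
  have keyL: "d*t+1 \<le> card {server_of s nj r |r. r < N \<and> (\<Sum>i<l. lam i * R i r) \<noteq> 0}"
    if hh: "i0 < l" "lam i0 \<noteq> 0" "d*t \<le> s" for lam i0
  proof -
    obtain a0 where a0: "a0 \<in> Poly_Mapping.keys (fs i0)" "d \<le> card (Poly_Mapping.keys a0)"
      using fs(2) hh(1) by blast
    show ?thesis by (rule key[where d=d and t=t and s=s and l=l and fs=fs and m=m and N=N and R=R and nj=nj and Eval=Eval]) (rule hh pos(4) fsP[OF hh(1)] a0 corrN | simp add: N_def)+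
  qed
  have rateN: "real l / real N = (real s - real d * real t) / real s" using rate unfolding N_def .
  have dts: "d*t \<le> s"
  proof (cases "N = 0")
    case True
    then have "(real s - real d * real t) / real s = 0" using rateN by simp
    then have "real s = real d * real t" using pos(3) by simp
    then have "s = d*t" by (metis of_nat_eq_iff of_nat_mult)
    then show ?thesis by simp
  next
    case False
    then have "real l / real N > 0" using pos(1) by simp
    then have "(real s - real d * real t) / real s > 0" using rateN by simp
    then have "real d * real t < real s" using pos(3) by (simp add: zero_less_divide_iff)
    then have "d*t < s" by (metis of_nat_less_iff of_nat_mult)
    then show ?thesis by simp
  qed
  have zero0: "\<forall>i<l. lam i = 0" if "\<forall>r<N. (\<Sum>i<l. lam i * R i r) = 0" for lam
  proof (rule ccontr)
    assume "\<not> (\<forall>i<l. lam i = 0)"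
    then obtain i0 where "i0 < l" "lam i0 \<noteq> 0" by blast
    then have "d*t+1 \<le> card {server_of s nj r |r. r < N \<and> (\<Sum>i<l. lam i * R i r) \<noteq> 0}"
      using keyL dts by blast
    moreover have "{server_of s nj r |r. r < N \<and> (\<Sum>i<l. lam i * R i r) \<noteq> 0} = {}" using that by auto
    ultimately show False by simp
  qed
  have Npos: "N > 0"
  proof (rule ccontr)
    assume "\<not> N > 0"
    then have "N = 0" by simp
    then have "\<forall>i<l. (1::'f) = 0" using zero0[of "\<lambda>_. 1"] by simp
    then show False using pos(1) by simp
  qed
  have dtlt: "d*t < s"
  proof -
    have "real l / real N > 0" using Npos pos(1) by simp
    then have "(real s - real d * real t) / real s > 0" using rateN by simp
    then have "real d * real t < real s" using pos(3) by (simp add: zero_less_divide_iff)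
    then show "d*t < s" by (metis of_nat_less_iff of_nat_mult)
  qed
  have realeq: "real l * real s = real N * (real s - real d * real t)"
    using rateN Npos pos(3) by (simp add: field_simps)
  have lsN: "l * s = N * (s - d*t)"
  proof -
    have "real (l * s) = real (N * (s - d*t))" using realeq dts by (simp add: of_nat_diff)
    then show ?thesis by (metis of_nat_eq_iff)
  qed
  have Nreal: "real N = real l * real s / (real s - real d * real t)"
  proof -
    have "real d * real t < real s" using dtlt by (metis of_nat_less_iff of_nat_mult)
    then show ?thesis using realeq by (simp add: field_simps)
  qed
  define row where "row i = (\<lambda>r. if r < N then R i r else 0)" for i
  define B where "B = row ` {0..<l}"
  interpret VS: vector_space "vscale :: 'f \<Rightarrow> (nat \<Rightarrow> 'f) \<Rightarrow> nat \<Rightarrow> 'f" by (rule vs_vscale)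
  have C_eq: "row_span l N R = VS.span B" unfolding row_span_def B_def row_def by simp
  have comb: "(\<Sum>i\<in>{0..<l}. vscale (w i) (row i)) = (\<lambda>r. if r < N then (\<Sum>i<l. w i * R i r) else 0)" for w
  proof (rule ext)
    fix r show "(\<Sum>i\<in>{0..<l}. vscale (w i) (row i)) r = (if r < N then (\<Sum>i<l. w i * R i r) else 0)"
      by (cases "r < N") (simp_all add: fun_sum_apply vscale_def row_def atLeast0LessThan)
  qed
  have inj_row: "inj_on row {0..<l}"
  proof (rule inj_onI)
    fix i i' assume i: "i \<in> {0..<l}" "i' \<in> {0..<l}" "row i = row i'"
    show "i = i'"
    proof (rule ccontr)
      assume ne: "i \<noteq> i'"
      define lam where "lam k = (if k = i then 1 else if k = i' then -1 else (0::'f))" for k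
      have "\<forall>r<N. (\<Sum>k<l. lam k * R k r) = 0"
      proof (intro allI impI)
        fix r assume r: "r < N"
        have "(\<Sum>k<l. lam k * R k r) = (\<Sum>k<l. (if k = i then R i r else 0) + (if k = i' then - R i' r else 0))"
          by (rule sum.cong) (auto simp: lam_def ne)
        also have "\<dots> = R i r - R i' r" using i by (simp add: sum.distrib)
        also have "\<dots> = 0" using fun_cong[OF i(3), of r] r by (simp add: row_def)
        finally show "(\<Sum>k<l. lam k * R k r) = 0" .
      qed
      then have "lam i = 0" using zero0 i by auto
      then show False by (simp add: lam_def)
    qed
  qed
  have cB: "card B = l" unfolding B_def using card_image[OF inj_row] by simp
  have fB: "finite B" unfolding B_def by simp
  have spanrep: "\<exists>w. c = (\<lambda>r. if r < N then (\<Sum>i<l. w i * R i r) else 0)" if "c \<in> VS.span B" for c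
  proof -
    from that obtain u where "c = (\<Sum>v\<in>B. vscale (u v) v)" using VS.span_finite[OF fB] by auto
    also have "\<dots> = (\<Sum>i\<in>{0..<l}. vscale (u (row i)) (row i))" unfolding B_def
      by (rule sum.reindex[OF inj_row, unfolded comp_def])
    also have "\<dots> = (\<lambda>r. if r < N then (\<Sum>i<l. u (row i) * R i r) else 0)" by (rule comb)
    finally have ce: "c = (\<lambda>r. if r < N then (\<Sum>i<l. u (row i) * R i r) else 0)" .
    show ?thesis by (rule exI[of _ "\<lambda>i. u (row i)"]) (simp add: ce)
  qed
  have indep: "VS.independent B"
    unfolding VS.independent_explicit_module
  proof (intro allI impI)
    fix T u v assume T: "finite T" "T \<subseteq> B" "(\<Sum>v\<in>T. vscale (u v) v) = 0" "v \<in> T"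
    define u' where "u' v = (if v \<in> T then u v else 0)" for v
    have "(\<Sum>v\<in>T. vscale (u v) v) = (\<Sum>v\<in>B. vscale (u' v) v)"
      by (rule sum.mono_neutral_cong_left) (use fB T in \<open>auto simp: u'_def vscale_def fun_eq_iff\<close>)
    also have "\<dots> = (\<Sum>i\<in>{0..<l}. vscale (u' (row i)) (row i))" unfolding B_def
      by (rule sum.reindex[OF inj_row, unfolded comp_def])
    also have "\<dots> = (\<lambda>r. if r < N then (\<Sum>i<l. u' (row i) * R i r) else 0)" by (rule comb)
    finally have e: "(\<lambda>r. if r < N then (\<Sum>i<l. u' (row i) * R i r) else 0) = 0" using T(3) by simp
    have "\<forall>r<N. (\<Sum>i<l. u' (row i) * R i r) = 0"
    proof (intro allI impI)
      fix r assume "r < N" then show "(\<Sum>i<l. u' (row i) * R i r) = 0" using fun_cong[OF e, of r] by simp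
    qed
    then have z: "\<forall>i<l. u' (row i) = 0" using zero0[of "\<lambda>i. u' (row i)"] by simp
    from T(2,4) obtain i where "i < l" "v = row i" unfolding B_def by auto
    then show "u v = 0" using z T(4) unfolding u'_def by (metis (full_types))
  qed
  have dimC: "code_dim (row_span l N R) = l"
    unfolding code_dim_def C_eq using VS.dim_span_eq_card_independent[OF indep] cB by simp
  have row0: "row 0 \<in> VS.span B" unfolding B_def using pos(1) by (intro VS.span_base) auto
  have row0nz: "row 0 \<noteq> 0"
  proof
    assume r0: "row 0 = 0"
    have "\<forall>r<N. (\<Sum>i<l. (if i = 0 then 1 else 0) * R i r) = 0"
    proof (intro allI impI)
      fix r assume "r < N"
      then have "R 0 r = 0" using fun_cong[OF r0, of r] by (simp add: row_def)
      have "(\<Sum>i<l. (if i = 0 then 1 else 0) * R i r) = (\<Sum>i<l. if i = 0 then R 0 r else 0)"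
        by (rule sum.cong) auto
      then show "(\<Sum>i<l. (if i = 0 then 1 else 0) * R i r) = 0" using pos(1) \<open>R 0 r = 0\<close> by simp
    qed
    then have "\<forall>i<l. (if i = 0 then 1 else (0::'f)) = 0" by (rule zero0)
    then show False using pos(1) by auto
  qed
  have lw: "d*t+1 \<le> labelweight N (server_of s nj) c" if c: "c \<in> VS.span B" "c \<noteq> 0" for c
  proof -
    obtain w where w: "c = (\<lambda>r. if r < N then (\<Sum>i<l. w i * R i r) else 0)" using spanrep[OF c(1)] by blast
    have "\<exists>i0<l. w i0 \<noteq> 0"
    proof (rule ccontr)
      assume "\<not> ?thesis"
      then have "c = 0" using w by (simp add: fun_eq_iff)
      then show False using c(2) by simp
    qed
    then obtain i0 where "i0 < l" "w i0 \<noteq> 0" by blast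
    then have "d*t+1 \<le> card {server_of s nj r |r. r < N \<and> (\<Sum>i<l. w i * R i r) \<noteq> 0}"
      using keyL dts by blast
    moreover have "{server_of s nj r |r. r < N \<and> (\<Sum>i<l. w i * R i r) \<noteq> 0}
        = {server_of s nj i |i. i < N \<and> c i \<noteq> 0}" using w by auto
    ultimately show ?thesis unfolding labelweight_def by simp
  qed
  have lw_le: "labelweight N (server_of s nj) c \<le> N" for c :: "nat \<Rightarrow> 'f"
  proof -
    have "{server_of s nj i |i. i < N \<and> c i \<noteq> 0} = server_of s nj ` {i. i < N \<and> c i \<noteq> 0}" by blast
    then have "labelweight N (server_of s nj) c \<le> card {i. i < N \<and> c i \<noteq> 0}"
      unfolding labelweight_def by (simp add: card_image_le)
    also have "\<dots> \<le> card {..<N}" by (rule card_mono) auto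
    finally show ?thesis by simp
  qed
  have CLW: "d*t+1 \<le> code_labelweight N (server_of s nj) (VS.span B)"
  proof -
    let ?SS = "{labelweight N (server_of s nj) c |c. c \<in> VS.span B \<and> c \<noteq> 0}"
    have fin: "finite ?SS" by (rule finite_subset[of _ "{..N}"]) (auto intro: lw_le)
    have ne: "?SS \<noteq> {}" using row0 row0nz by blast
    show ?thesis unfolding code_labelweight_def using fin ne lw by auto
  qed
  have njpos: "0 < nj j" if "j < s" for j
  proof (rule ccontr)
    assume "\<not> 0 < nj j"
    then have z: "nj j = 0" by simp
    have sing: "l \<le> N - (\<Sum>j\<in>D. nj j)" if D: "D \<subseteq> {0..<s}" "card D = d*t" for D
    proof -
      have fD: "finite D" using D(1) finite_subset by blast
      have "l \<le> card {r. r < N \<and> server_of s nj r \<notin> D}"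
        by (rule singleton_count[where k="d*t"]) (use keyL dts D fD in auto)
      then show ?thesis using card_P[OF D(1) N_def] by simp
    qed
    have "0 < d*t" using pos by simp
    then have "N = 0" using avg_contra[OF that z dtlt _ sing lsN N_def] by blast
    then show False using Npos by simp
  qed
  have lab: "is_labeling N s (server_of s nj)"
    unfolding is_labeling_def
  proof (intro set_eqI iffI)
    fix j assume "j \<in> server_of s nj ` {0..<N}"
    then show "j \<in> {0..<s}" using server_of_props[where s=s and nj=nj] N_def by auto
  next
    fix j assume j: "j \<in> {0..<s}"
    then have "server_of s nj (offset nj j) = j" using njpos[of j] by (intro server_of_eq) auto
    moreover have "offset nj j < N" using offset_le_total[of j s nj] njpos[of j] j N_def by auto
    ultimately show "j \<in> server_of s nj ` {0..<N}" by force
  qed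
  have lc: "linear_code N (VS.span B)"
    unfolding linear_code_def
  proof (intro conjI ballI allI)
    show "VS.span B \<subseteq> Fvec N"
    proof
      fix c assume "c \<in> VS.span B"
      then obtain w where "c = (\<lambda>r. if r < N then (\<Sum>i<l. w i * R i r) else 0)" using spanrep by blast
      then show "c \<in> Fvec N" by (simp add: Fvec_def)
    qed
    have "(\<lambda>_. 0) = (0::nat \<Rightarrow> 'f)" by (simp add: fun_eq_iff)
    then show "(\<lambda>_. 0::'f) \<in> VS.span B" using VS.span_zero by simp
    fix u v assume "u \<in> VS.span B" "v \<in> VS.span B"
    moreover have "(\<lambda>i. u i + v i) = u + v" by (simp add: fun_eq_iff)
    ultimately show "(\<lambda>i. u i + v i) \<in> VS.span B" using VS.span_add by simp
  next
    fix c v assume "v \<in> VS.span B"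
    then show "vscale c v \<in> VS.span B" by (rule VS.span_scale)
  qed
  show ?thesis
  proof (intro exI conjI)
    show "real N = real l * real s / (real s - real d * real t)" by (rule Nreal)
    show "row_span l N R = row_span l N R" ..
    show "server_of s nj = server_of s nj" ..
    show "linear_code N (row_span l N R)" using lc C_eq by simp
    show "code_rate N (row_span l N R) = (real s - real d * real t) / real s"
      unfolding code_rate_def dimC using rateN .
    show "is_labeling N s (server_of s nj)" by (rule lab)
    show "d * t + 1 \<le> code_labelweight N (server_of s nj) (row_span l N R)" using CLW C_eq by simp
  qed
qed

end
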